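(* Let $X$ be a $W$-space (for example, a realcompact space). Then the strong dual of $C_k(X)$ has a fundamental bounded resolution if and only if $X$ has a fundamental compact resolution.
   Context: $C_k(X)$ is the space of continuous real-valued functions on the Tychonoff space $X$ with the compact-open topology; its strong dual carries the topology of uniform convergence on bounded subsets of $C_k(X)$. A subset $A\subseteq X$ is $b$-bounding if for every bounded subset $B$ of $C_k(X)$, $\sup\{|f(x)|:x\in A,f\in B\}<\infty$; $X$ is a $W$-space if every $b$-bounding subset of $X$ is relatively compact. Order $\mathbb{N}^{\mathbb{N}}$ pointwise. A resolution is a family $\{A_\alpha:\alpha\in\mathbb{N}^{\mathbb{N}}\}$ covering the space with $A_\alpha\subseteq A_\beta$ for $\alpha\le\beta$. A fundamental compact resolution of $X$ is a resolution of compact sets such that every compact subset of $X$ lies in some member; a fundamental bounded resolution of a locally convex space is a resolution of bounded sets such that every bounded set lies in some member. *)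

theory Defs
  imports "HOL-Analysis.Analysis"
begin

definition tychonoff_space :: "'a topology \<Rightarrow> bool" where
  "tychonoff_space X \<longleftrightarrow> Hausdorff_space X \<and> completely_regular_space X"

text \<open>Carrier of C(X): continuous real functions on X (extensional: 0 outside the carrier).\<close>
definition Cfun :: "'a topology \<Rightarrow> ('a \<Rightarrow> real) set" where
  "Cfun X = {f. continuous_map X euclideanreal f \<and> (\<forall>x. x \<notin> topspace X \<longrightarrow> f x = 0)}"

text \<open>Bounded subsets of C_k(X): the compact-open topology on C(X) is the locally convex
  topology of the seminorms sup over K of |f|, K compact; a set is bounded iff each seminorm
  is bounded on it.\<close>
definition ck_bounded :: "'a topology \<Rightarrow> ('a \<Rightarrow> real) set \<Rightarrow> bool" where
  "ck_bounded X B \<longleftrightarrow> B \<subseteq> Cfun X \<and>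
     (\<forall>K. compactin X K \<longrightarrow> (\<exists>M. \<forall>f\<in>B. \<forall>x\<in>K. \<bar>f x\<bar> \<le> M))"

text \<open>The (topological) dual of C_k(X): linear functionals continuous for the compact-open
  topology, i.e. dominated by a multiple of one of the seminorms (extensional: 0 off C(X)).\<close>
definition ck_dual :: "'a topology \<Rightarrow> (('a \<Rightarrow> real) \<Rightarrow> real) set" where
  "ck_dual X = {\<phi>.
      (\<forall>f\<in>Cfun X. \<forall>g\<in>Cfun X. \<phi> (\<lambda>x. f x + g x) = \<phi> f + \<phi> g) \<and>
      (\<forall>f\<in>Cfun X. \<forall>c. \<phi> (\<lambda>x. c * f x) = c * \<phi> f) \<and>
      (\<exists>K c. compactin X K \<and>
          (\<forall>f\<in>Cfun X. \<forall>M. (\<forall>x\<in>K. \<bar>f x\<bar> \<le> M) \<longrightarrow> \<bar>\<phi> f\<bar> \<le> c * M)) \<and>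
      (\<forall>f. f \<notin> Cfun X \<longrightarrow> \<phi> f = 0)}"

text \<open>Bounded subsets of the strong dual (topology of uniform convergence on bounded
  subsets of C_k(X)).\<close>
definition strong_dual_bounded :: "'a topology \<Rightarrow> (('a \<Rightarrow> real) \<Rightarrow> real) set \<Rightarrow> bool" where
  "strong_dual_bounded X S \<longleftrightarrow> S \<subseteq> ck_dual X \<and>
     (\<forall>B. ck_bounded X B \<longrightarrow> (\<exists>M. \<forall>\<phi>\<in>S. \<forall>f\<in>B. \<bar>\<phi> f\<bar> \<le> M))"

definition b_bounding :: "'a topology \<Rightarrow> 'a set \<Rightarrow> bool" where
  "b_bounding X A \<longleftrightarrow> A \<subseteq> topspace X \<and>
     (\<forall>B. ck_bounded X B \<longrightarrow> (\<exists>M. \<forall>x\<in>A. \<forall>f\<in>B. \<bar>f x\<bar> \<le> M))"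

definition W_space :: "'a topology \<Rightarrow> bool" where
  "W_space X \<longleftrightarrow> (\<forall>A. b_bounding X A \<longrightarrow> compactin X (X closure_of A))"

text \<open>Resolutions indexed by N^N with the pointwise order (the order on nat \<Rightarrow> nat).\<close>
definition fundamental_compact_resolution :: "'a topology \<Rightarrow> ((nat \<Rightarrow> nat) \<Rightarrow> 'a set) \<Rightarrow> bool" where
  "fundamental_compact_resolution X K \<longleftrightarrow>
     (\<forall>\<alpha>. compactin X (K \<alpha>)) \<and>
     (\<forall>\<alpha> \<beta>. \<alpha> \<le> \<beta> \<longrightarrow> K \<alpha> \<subseteq> K \<beta>) \<and>
     (\<Union>\<alpha>. K \<alpha>) = topspace X \<and>
     (\<forall>C. compactin X C \<longrightarrow> (\<exists>\<alpha>. C \<subseteq> K \<alpha>))"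

definition fundamental_bounded_resolution_strong_dual ::
  "'a topology \<Rightarrow> ((nat \<Rightarrow> nat) \<Rightarrow> (('a \<Rightarrow> real) \<Rightarrow> real) set) \<Rightarrow> bool" where
  "fundamental_bounded_resolution_strong_dual X A \<longleftrightarrow>
     (\<forall>\<alpha>. strong_dual_bounded X (A \<alpha>)) \<and>
     (\<forall>\<alpha> \<beta>. \<alpha> \<le> \<beta> \<longrightarrow> A \<alpha> \<subseteq> A \<beta>) \<and>
     (\<Union>\<alpha>. A \<alpha>) = ck_dual X \<and>
     (\<forall>S. strong_dual_bounded X S \<longrightarrow> (\<exists>\<alpha>. S \<subseteq> A \<alpha>))"

end

theory Submission
  imports Defs
begin

lemma Cfun_iff: "f \<in> Cfun X \<longleftrightarrow> continuous_map X euclideanreal f \<and> (\<forall>x. x \<notin> topspace X \<longrightarrow> f x = 0)"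
  by (simp add: Cfun_def)

lemma Cfun_add: "f \<in> Cfun X \<Longrightarrow> g \<in> Cfun X \<Longrightarrow> (\<lambda>x. f x + g x) \<in> Cfun X"
  by (simp add: Cfun_iff continuous_map_add)

lemma Cfun_scale: "f \<in> Cfun X \<Longrightarrow> (\<lambda>x. c * f x) \<in> Cfun X"
  by (simp add: Cfun_iff continuous_map_real_mult_left)

lemma Cfun_mult: "f \<in> Cfun X \<Longrightarrow> continuous_map X euclideanreal g \<Longrightarrow> (\<lambda>x. f x * g x) \<in> Cfun X"
  by (simp add: Cfun_iff continuous_map_real_mult)

lemma compact_bound:
  assumes "compactin X C" "continuous_map X euclideanreal g"
  shows "\<exists>M. \<forall>x\<in>C. \<bar>g x\<bar> \<le> M"
proof -
  have "compact (g ` C)" using image_compactin[OF assms(1) assms(2)] by simp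
  then have "bounded (g ` C)" by (rule compact_imp_bounded)
  then obtain a where "\<forall>y\<in>g ` C. norm y \<le> a" by (auto simp: bounded_iff)
  then show ?thesis by auto
qed

definition delta :: "'a topology \<Rightarrow> 'a \<Rightarrow> ('a \<Rightarrow> real) \<Rightarrow> real" where
  "delta X x = (\<lambda>f. if f \<in> Cfun X then f x else 0)"

lemma delta_dual: "x \<in> topspace X \<Longrightarrow> delta X x \<in> ck_dual X"
  unfolding ck_dual_def delta_def
  apply (intro CollectI conjI ballI allI impI)
     apply (simp add: Cfun_add)
    apply (simp add: Cfun_scale)
   apply (rule exI[of _ "{x}"], rule exI[of _ 1])
   apply simp
  apply simp
  done

lemma forward:
  assumes W: "W_space X" and A: "fundamental_bounded_resolution_strong_dual X A"
  shows "\<exists>K. fundamental_compact_resolution X K"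
proof -
  define P where "P \<alpha> = {x \<in> topspace X. delta X x \<in> A \<alpha>}" for \<alpha>
  have Ab: "\<And>\<alpha>. strong_dual_bounded X (A \<alpha>)" and Am: "\<And>\<alpha> \<beta>. \<alpha> \<le> \<beta> \<Longrightarrow> A \<alpha> \<subseteq> A \<beta>"
    and Au: "(\<Union>\<alpha>. A \<alpha>) = ck_dual X"
    and Af: "\<And>S. strong_dual_bounded X S \<Longrightarrow> \<exists>\<alpha>. S \<subseteq> A \<alpha>"
    using A unfolding fundamental_bounded_resolution_strong_dual_def by auto
  have bb: "b_bounding X (P \<alpha>)" for \<alpha>
    unfolding b_bounding_def
  proof (intro conjI allI impI)
    show "P \<alpha> \<subseteq> topspace X" by (auto simp: P_def)
    fix B assume B: "ck_bounded X B"
    then obtain M where M: "\<forall>\<phi>\<in>A \<alpha>. \<forall>f\<in>B. \<bar>\<phi> f\<bar> \<le> M"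
      using Ab unfolding strong_dual_bounded_def by blast
    have "\<forall>x\<in>P \<alpha>. \<forall>f\<in>B. \<bar>f x\<bar> \<le> M"
    proof (intro ballI)
      fix x f assume x: "x \<in> P \<alpha>" and f: "f \<in> B"
      then have "f \<in> Cfun X" using B by (auto simp: ck_bounded_def)
      then show "\<bar>f x\<bar> \<le> M" using M x f by (force simp: P_def delta_def)
    qed
    then show "\<exists>M. \<forall>x\<in>P \<alpha>. \<forall>f\<in>B. \<bar>f x\<bar> \<le> M" by blast
  qed
  define K where "K \<alpha> = X closure_of (P \<alpha>)" for \<alpha>
  show ?thesis
    unfolding fundamental_compact_resolution_def
  proof (intro exI[of _ K] conjI allI impI)
    show "compactin X (K \<alpha>)" for \<alpha>
      using W bb unfolding W_space_def K_def by blast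
    show "K \<alpha> \<subseteq> K \<beta>" if "\<alpha> \<le> \<beta>" for \<alpha> \<beta>
      unfolding K_def using Am[OF that] by (intro closure_of_mono) (auto simp: P_def)
    show "(\<Union>\<alpha>. K \<alpha>) = topspace X"
    proof (rule equalityI)
      show "(\<Union>\<alpha>. K \<alpha>) \<subseteq> topspace X" unfolding K_def by (rule UN_least) (rule closure_of_subset_topspace)
    next
      show "topspace X \<subseteq> (\<Union>\<alpha>. K \<alpha>)"
      proof
        fix x assume x: "x \<in> topspace X"
        have "delta X x \<in> (\<Union>\<alpha>. A \<alpha>)" using delta_dual[OF x] Au by simp
        then obtain \<alpha> where "delta X x \<in> A \<alpha>" by blast
        then have "x \<in> P \<alpha>" using x by (simp add: P_def)
        moreover have "P \<alpha> \<subseteq> K \<alpha>" unfolding K_def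
          by (rule closure_of_subset) (auto simp: P_def)
        ultimately have "x \<in> K \<alpha>" by blast
        then show "x \<in> (\<Union>\<alpha>. K \<alpha>)" by blast
      qed
    qed
    fix C assume C: "compactin X C"
    have Ct: "C \<subseteq> topspace X" using C by (rule compactin_subset_topspace)
    have "strong_dual_bounded X (delta X ` C)"
      unfolding strong_dual_bounded_def
    proof (intro conjI allI impI)
      show "delta X ` C \<subseteq> ck_dual X" using Ct by (auto intro!: delta_dual)
      fix B assume B: "ck_bounded X B"
      then have BC: "B \<subseteq> Cfun X" by (simp add: ck_bounded_def)
      have "\<forall>K. compactin X K \<longrightarrow> (\<exists>M. \<forall>f\<in>B. \<forall>x\<in>K. \<bar>f x\<bar> \<le> M)" using B by (simp add: ck_bounded_def)
      then obtain M where M: "\<forall>f\<in>B. \<forall>x\<in>C. \<bar>f x\<bar> \<le> M" using C by blast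
      have "\<forall>\<phi>\<in>delta X ` C. \<forall>f\<in>B. \<bar>\<phi> f\<bar> \<le> M"
      proof (intro ballI)
        fix \<phi> f assume "\<phi> \<in> delta X ` C" "f \<in> B"
        then obtain x where x: "x \<in> C" "\<phi> = delta X x" by blast
        have "f \<in> Cfun X" using BC \<open>f \<in> B\<close> by blast
        then have "\<phi> f = f x" using x by (simp add: delta_def)
        then show "\<bar>\<phi> f\<bar> \<le> M" using M \<open>f \<in> B\<close> x by simp
      qed
      then show "\<exists>M. \<forall>\<phi>\<in>delta X ` C. \<forall>f\<in>B. \<bar>\<phi> f\<bar> \<le> M" by blast
    qed
    then obtain \<alpha> where al: "delta X ` C \<subseteq> A \<alpha>" using Af by blast
    have "C \<subseteq> P \<alpha>"
    proof
      fix x assume "x \<in> C"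
      then show "x \<in> P \<alpha>" using al Ct unfolding P_def by blast
    qed
    moreover have "P \<alpha> \<subseteq> K \<alpha>" unfolding K_def
      by (rule closure_of_subset) (auto simp: P_def)
    ultimately show "\<exists>\<alpha>. C \<subseteq> K \<alpha>" by blast
  qed
qed

lemma null_induct:
  fixes \<phi> :: "('a \<Rightarrow> real) \<Rightarrow> real"
  assumes crs: "completely_regular_space X"
    and add: "\<And>f g. f \<in> Cfun X \<Longrightarrow> g \<in> Cfun X \<Longrightarrow> \<phi> (\<lambda>x. f x + g x) = \<phi> f + \<phi> g"
    and van: "\<And>f. f \<in> Cfun X \<Longrightarrow> \<forall>x\<in>K0. f x = 0 \<Longrightarrow> \<phi> f = 0"
    and fin: "finite F"
  shows "(\<forall>U\<in>F. openin X U \<and> (\<forall>g\<in>Cfun X. (\<forall>x\<in>topspace X - U. g x = 0) \<longrightarrow> \<phi> g = 0)) \<longrightarrow>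
         (\<forall>C f. compactin X C \<and> C \<subseteq> \<Union>F \<and> f \<in> Cfun X \<and> (\<forall>x\<in>K0 - C. f x = 0) \<longrightarrow> \<phi> f = 0)"
  using fin
proof (induction F rule: finite_induct)
  case empty
  show ?case
  proof (intro impI allI)
    fix C f assume "compactin X C \<and> C \<subseteq> \<Union>{} \<and> f \<in> Cfun X \<and> (\<forall>x\<in>K0 - C. f x = 0)"
    then show "\<phi> f = 0" using van by auto
  qed
next
  case (insert U F)
  show ?case
  proof (intro impI allI)
    assume hyp: "\<forall>U\<in>insert U F. openin X U \<and> (\<forall>g\<in>Cfun X. (\<forall>x\<in>topspace X - U. g x = 0) \<longrightarrow> \<phi> g = 0)"
    fix C f assume Cf: "compactin X C \<and> C \<subseteq> \<Union>(insert U F) \<and> f \<in> Cfun X \<and> (\<forall>x\<in>K0 - C. f x = 0)"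
    have C: "compactin X C" and CU: "C \<subseteq> U \<union> \<Union>F" and fC: "f \<in> Cfun X" and fz: "\<forall>x\<in>K0 - C. f x = 0"
      using Cf by auto
    have Ct: "C \<subseteq> topspace X" using C by (rule compactin_subset_topspace)
    have Uo: "openin X U" and Un: "\<And>g. g \<in> Cfun X \<Longrightarrow> \<forall>x\<in>topspace X - U. g x = 0 \<Longrightarrow> \<phi> g = 0"
      using hyp by auto
    have IH: "\<forall>C f. compactin X C \<and> C \<subseteq> \<Union>F \<and> f \<in> Cfun X \<and> (\<forall>x\<in>K0 - C. f x = 0) \<longrightarrow> \<phi> f = 0"
      using insert.IH hyp by auto
    define W where "W = \<Union>F"
    have Wo: "openin X W" using hyp by (auto simp: W_def)
    define C1 where "C1 = (topspace X - W) \<inter> C"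
    have C1c: "compactin X C1" unfolding C1_def
      by (rule closed_Int_compactin) (use Wo C in auto)
    have dj: "disjnt C1 (topspace X - U)" using CU by (auto simp: C1_def W_def disjnt_def)
    have cl: "closedin X (topspace X - U)" using Uo by auto
    obtain \<psi> :: "_ \<Rightarrow> real" where \<psi>c: "continuous_map X (top_of_set {0..2}) \<psi>" and \<psi>0: "\<psi> ` (topspace X - U) \<subseteq> {0}"
      and \<psi>2: "\<psi> ` C1 \<subseteq> {2}"
      by (rule Urysohn_completely_regular_compact_closed[of 0 2 X C1 "topspace X - U"]) (use crs C1c cl dj in auto)
    have \<psi>r: "continuous_map X euclideanreal \<psi>"
      using \<psi>c by (simp add: continuous_map_in_subtopology)
    define ch where "ch x = min 1 (\<psi> x)" for x
    have chc: "continuous_map X euclideanreal ch" unfolding ch_def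
      by (intro continuous_map_real_min \<psi>r continuous_map_const[THEN iffD2]) simp
    define f1 where "f1 x = f x * ch x" for x
    define f2 where "f2 x = f x * (1 - ch x)" for x
    have f1C: "f1 \<in> Cfun X" unfolding f1_def by (rule Cfun_mult[OF fC chc])
    have f2C: "f2 \<in> Cfun X" unfolding f2_def
      by (rule Cfun_mult[OF fC]) (intro continuous_map_diff chc continuous_map_const[THEN iffD2], simp)
    have fsum: "(\<lambda>x. f1 x + f2 x) = f" by (auto simp: f1_def f2_def algebra_simps)
    have p1: "\<phi> f1 = 0"
    proof (rule Un[OF f1C], intro ballI)
      fix x assume "x \<in> topspace X - U"
      then have "\<psi> x = 0" using \<psi>0 by auto
      then show "f1 x = 0" by (simp add: f1_def ch_def)
    qed
    define C' where "C' = {x \<in> topspace X. \<psi> x \<in> {..1}} \<inter> C"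
    have C'c: "compactin X C'" unfolding C'_def
      by (rule closed_Int_compactin[OF closedin_continuous_map_preimage[OF \<psi>r] C]) simp
    have C'F: "C' \<subseteq> \<Union>F"
    proof
      fix x assume x: "x \<in> C'"
      show "x \<in> \<Union>F"
      proof (rule ccontr)
        assume "x \<notin> \<Union>F"
        then have "x \<in> C1" using x by (auto simp: C1_def C'_def W_def)
        then have "\<psi> x = 2" using \<psi>2 by auto
        then show False using x by (auto simp: C'_def)
      qed
    qed
    have f2z: "\<forall>x\<in>K0 - C'. f2 x = 0"
    proof
      fix x assume x: "x \<in> K0 - C'"
      show "f2 x = 0"
      proof (cases "x \<in> C")
        case True
        then have "x \<in> topspace X" using Ct by auto
        then have "\<psi> x > 1" using x True by (auto simp: C'_def)
        then show ?thesis by (simp add: f2_def ch_def)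
      next
        case False
        then show ?thesis using fz x by (simp add: f2_def)
      qed
    qed
    have p2: "\<phi> f2 = 0" using IH C'c C'F f2C f2z by blast
    have "\<phi> f = \<phi> f1 + \<phi> f2" using add[OF f1C f2C] fsum by simp
    then show "\<phi> f = 0" using p1 p2 by simp
  qed
qed

lemma dual_props:
  assumes "\<phi> \<in> ck_dual X"
  shows "\<And>f g. f \<in> Cfun X \<Longrightarrow> g \<in> Cfun X \<Longrightarrow> \<phi> (\<lambda>x. f x + g x) = \<phi> f + \<phi> g"
    and "\<And>f c. f \<in> Cfun X \<Longrightarrow> \<phi> (\<lambda>x. c * f x) = c * \<phi> f"
    and "\<exists>K c. compactin X K \<and> (\<forall>f\<in>Cfun X. \<forall>M. (\<forall>x\<in>K. \<bar>f x\<bar> \<le> M) \<longrightarrow> \<bar>\<phi> f\<bar> \<le> c * M)"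
  using assms unfolding ck_dual_def by auto

lemma Z_bounding:
  fixes S :: "(('a \<Rightarrow> real) \<Rightarrow> real) set"
  assumes Sd: "S \<subseteq> ck_dual X"
    and Sb: "\<And>B. ck_bounded X B \<Longrightarrow> \<exists>M. \<forall>\<phi>\<in>S. \<forall>f\<in>B. \<bar>\<phi> f\<bar> \<le> M"
    and Zdef: "Z = {y \<in> topspace X. \<forall>U. openin X U \<and> y \<in> U \<longrightarrow>
            (\<exists>g\<in>Cfun X. (\<forall>x\<in>topspace X - U. g x = 0) \<and> (\<exists>\<phi>\<in>S. \<phi> g \<noteq> 0))}"
  shows "b_bounding X Z"
proof (rule ccontr)
  assume nb: "\<not> b_bounding X Z"
  have "Z \<subseteq> topspace X" unfolding Zdef by blast
  then obtain B where B: "ck_bounded X B" and nM: "\<not> (\<exists>M. \<forall>x\<in>Z. \<forall>f\<in>B. \<bar>f x\<bar> \<le> M)"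
    using nb unfolding b_bounding_def by blast
  have "\<forall>n::nat. \<exists>x\<in>Z. \<exists>f\<in>B. \<bar>f x\<bar> > real n"
  proof
    fix n :: nat
    from nM have "\<not> (\<forall>x\<in>Z. \<forall>f\<in>B. \<bar>f x\<bar> \<le> real n)" by blast
    then show "\<exists>x\<in>Z. \<exists>f\<in>B. \<bar>f x\<bar> > real n" by (meson not_le)
  qed
  then have "\<forall>n. \<exists>p. fst p \<in> Z \<and> snd p \<in> B \<and> \<bar>snd p (fst p)\<bar> > real n"
  proof (intro allI)
    fix n assume "\<forall>n::nat. \<exists>x\<in>Z. \<exists>f\<in>B. \<bar>f x\<bar> > real n"
    then obtain x f where "x \<in> Z" "f \<in> B" "\<bar>f x\<bar> > real n" by blast
    then show "\<exists>p. fst p \<in> Z \<and> snd p \<in> B \<and> \<bar>snd p (fst p)\<bar> > real n"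
      by (intro exI[of _ "(x, f)"]) simp
  qed
  then obtain p where p: "\<forall>n. fst (p n) \<in> Z \<and> snd (p n) \<in> B \<and> \<bar>snd (p n) (fst (p n))\<bar> > real n"
    using choice[where Q = "\<lambda>n p. fst p \<in> Z \<and> snd p \<in> B \<and> \<bar>snd p (fst p)\<bar> > real n"] by blast
  define xs where "xs n = fst (p n)" for n
  define fs where "fs n = snd (p n)" for n
  have xs: "\<And>n. xs n \<in> Z" and fs: "\<And>n. fs n \<in> B" and big: "\<And>n. \<bar>fs n (xs n)\<bar> > real n"
    using p by (auto simp: xs_def fs_def)
  have BC: "B \<subseteq> Cfun X" using B by (simp add: ck_bounded_def)
  define U where "U n = {x \<in> topspace X. \<bar>fs n x\<bar> \<in> {real n<..}}" for n
  have Uo: "openin X (U n)" for n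
  proof -
    have "fs n \<in> Cfun X" using BC fs by blast
    then have "continuous_map X euclideanreal (fs n)" by (simp add: Cfun_iff)
    then have "continuous_map X euclideanreal (\<lambda>x. \<bar>fs n x\<bar>)" by (rule continuous_map_real_abs)
    then show ?thesis unfolding U_def by (rule openin_continuous_map_preimage) simp
  qed
  have xsT: "xs n \<in> topspace X" for n using xs[of n] unfolding Zdef by blast
  have xU: "xs n \<in> U n" for n using xsT[of n] big[of n] by (auto simp: U_def)
  have "\<exists>g\<in>Cfun X. (\<forall>x\<in>topspace X - U n. g x = 0) \<and> (\<exists>\<phi>\<in>S. \<phi> g \<noteq> 0)" for n
  proof -
    have "\<forall>U. openin X U \<and> xs n \<in> U \<longrightarrow>
            (\<exists>g\<in>Cfun X. (\<forall>x\<in>topspace X - U. g x = 0) \<and> (\<exists>\<phi>\<in>S. \<phi> g \<noteq> 0))"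
      using xs[of n] unfolding Zdef by blast
    then show ?thesis using Uo[of n] xU[of n] by blast
  qed
  then have "\<forall>n. \<exists>q. fst q \<in> Cfun X \<and> (\<forall>x\<in>topspace X - U n. fst q x = 0) \<and> snd q \<in> S \<and> snd q (fst q) \<noteq> 0"
  proof (intro allI)
    fix n assume "\<And>n. \<exists>g\<in>Cfun X. (\<forall>x\<in>topspace X - U n. g x = 0) \<and> (\<exists>\<phi>\<in>S. \<phi> g \<noteq> 0)"
    then obtain g \<phi> where "g \<in> Cfun X" "\<forall>x\<in>topspace X - U n. g x = 0" "\<phi> \<in> S" "\<phi> g \<noteq> 0" by blast
    then show "\<exists>q. fst q \<in> Cfun X \<and> (\<forall>x\<in>topspace X - U n. fst q x = 0) \<and> snd q \<in> S \<and> snd q (fst q) \<noteq> 0"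
      by (intro exI[of _ "(g, \<phi>)"]) simp
  qed
  then obtain q where q: "\<forall>n. fst (q n) \<in> Cfun X \<and> (\<forall>x\<in>topspace X - U n. fst (q n) x = 0) \<and> snd (q n) \<in> S \<and> snd (q n) (fst (q n)) \<noteq> 0"
    using choice[where Q = "\<lambda>n q. fst q \<in> Cfun X \<and> (\<forall>x\<in>topspace X - U n. fst q x = 0) \<and> snd q \<in> S \<and> snd q (fst q) \<noteq> 0"] by blast
  define gs where "gs n = fst (q n)" for n
  define \<phi>s where "\<phi>s n = snd (q n)" for n
  have gs: "\<And>n. gs n \<in> Cfun X" and gv: "\<And>n x. x \<in> topspace X - U n \<Longrightarrow> gs n x = 0"
    and \<phi>s: "\<And>n. \<phi>s n \<in> S" and nz: "\<And>n. \<phi>s n (gs n) \<noteq> 0"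
    using q by (auto simp: gs_def \<phi>s_def)
  define h where "h n = (\<lambda>x. (real n / \<bar>\<phi>s n (gs n)\<bar>) * gs n x)" for n
  have hC: "h n \<in> Cfun X" for n unfolding h_def by (rule Cfun_scale[OF gs])
  have \<phi>h: "\<bar>\<phi>s n (h n)\<bar> = real n" for n
  proof -
    have "\<phi>s n \<in> ck_dual X" using \<phi>s Sd by blast
    then have "\<phi>s n (h n) = (real n / \<bar>\<phi>s n (gs n)\<bar>) * \<phi>s n (gs n)"
      unfolding h_def by (rule dual_props(2)[OF _ gs])
    then show ?thesis using nz[of n] by (simp add: abs_mult)
  qed
  have Hb: "ck_bounded X (range h)"
    unfolding ck_bounded_def
  proof (intro conjI allI impI)
    show "range h \<subseteq> Cfun X" using hC by auto
    fix C assume C: "compactin X C"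
    have Ct: "C \<subseteq> topspace X" using C by (rule compactin_subset_topspace)
    have "\<forall>K. compactin X K \<longrightarrow> (\<exists>M. \<forall>f\<in>B. \<forall>x\<in>K. \<bar>f x\<bar> \<le> M)" using B by (simp add: ck_bounded_def)
    then obtain MB where MB: "\<forall>f\<in>B. \<forall>x\<in>C. \<bar>f x\<bar> \<le> MB" using C by blast
    define N where "N = nat \<lceil>MB\<rceil>"
    have "\<exists>M. \<forall>x\<in>C. \<bar>h n x\<bar> \<le> M" for n
      using compact_bound[OF C] hC[of n] by (simp add: Cfun_iff)
    then obtain Mh where Mh: "\<forall>n. \<forall>x\<in>C. \<bar>h n x\<bar> \<le> Mh n"
      using choice[where Q = "\<lambda>n M. \<forall>x\<in>C. \<bar>h n x\<bar> \<le> M"] by blast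
    show "\<exists>M. \<forall>f\<in>range h. \<forall>x\<in>C. \<bar>f x\<bar> \<le> M"
    proof (intro exI[of _ "\<Sum>n<N. \<bar>Mh n\<bar>"] ballI)
      fix f x assume f: "f \<in> range h" and x: "x \<in> C"
      then obtain n where fn: "f = h n" by blast
      show "\<bar>f x\<bar> \<le> (\<Sum>n<N. \<bar>Mh n\<bar>)"
      proof (cases "n < N")
        case True
        have "\<bar>Mh n\<bar> \<le> (\<Sum>n<N. \<bar>Mh n\<bar>)"
          by (rule member_le_sum) (use True in auto)
        moreover have "\<bar>h n x\<bar> \<le> Mh n" using Mh x by blast
        ultimately show ?thesis unfolding fn by linarith
      next
        case False
        have "MB \<le> real N" unfolding N_def by (rule real_nat_ceiling_ge)
        also have "\<dots> \<le> real n" using False by simp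
        finally have "\<bar>fs n x\<bar> \<le> real n" using MB fs[of n] x by force
        then have "x \<in> topspace X - U n" using Ct x by (auto simp: U_def)
        then have "h n x = 0" using gv by (simp add: h_def)
        moreover have "0 \<le> (\<Sum>n<N. \<bar>Mh n\<bar>)" by (rule sum_nonneg) simp
        ultimately show ?thesis using fn by simp
      qed
    qed
  qed
  obtain M' where M': "\<forall>\<phi>\<in>S. \<forall>f\<in>range h. \<bar>\<phi> f\<bar> \<le> M'" using Sb[OF Hb] by blast
  define n where "n = nat \<lceil>M'\<rceil> + 1"
  have "\<bar>\<phi>s n (h n)\<bar> \<le> M'" using M' \<phi>s[of n] by blast
  moreover have "M' < real n" unfolding n_def using real_nat_ceiling_ge[of M'] by simp
  ultimately show False using \<phi>h[of n] by simp
qed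

lemma main_equicont:
  fixes S :: "(('a \<Rightarrow> real) \<Rightarrow> real) set" and X :: "'a topology"
  assumes T: "tychonoff_space X" and W: "W_space X" and S: "strong_dual_bounded X S"
  shows "\<exists>K1 c. compactin X K1 \<and> (\<forall>\<phi>\<in>S. \<forall>f\<in>Cfun X. \<forall>M\<ge>0. (\<forall>x\<in>K1. \<bar>f x\<bar> \<le> M) \<longrightarrow> \<bar>\<phi> f\<bar> \<le> c * M)"
proof -
  have crs: "completely_regular_space X" using T by (simp add: tychonoff_space_def)
  have Sd: "S \<subseteq> ck_dual X" using S by (simp add: strong_dual_bounded_def)
  have Sb: "\<And>B. ck_bounded X B \<Longrightarrow> \<exists>M. \<forall>\<phi>\<in>S. \<forall>f\<in>B. \<bar>\<phi> f\<bar> \<le> M"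
    using S by (simp add: strong_dual_bounded_def)
  define Z where "Z = {y \<in> topspace X. \<forall>U. openin X U \<and> y \<in> U \<longrightarrow>
            (\<exists>g\<in>Cfun X. (\<forall>x\<in>topspace X - U. g x = 0) \<and> (\<exists>\<phi>\<in>S. \<phi> g \<noteq> 0))}"
  have Zb: "b_bounding X Z" by (rule Z_bounding[OF Sd Sb Z_def])
  define K1 where "K1 = X closure_of Z"
  have K1c: "compactin X K1" using W Zb unfolding W_space_def K1_def by blast
  have ZK: "Z \<subseteq> K1" unfolding K1_def by (rule closure_of_subset) (auto simp: Z_def)
  have K1t: "K1 \<subseteq> topspace X" using K1c by (rule compactin_subset_topspace)
  have vanish: "\<phi> f = 0" if \<phi>S: "\<phi> \<in> S" and fC: "f \<in> Cfun X" and Vo: "openin X V" and KV: "K1 \<subseteq> V"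
    and fV: "\<forall>x\<in>V. f x = 0" for \<phi> f V
  proof -
    have \<phi>d: "\<phi> \<in> ck_dual X" using \<phi>S Sd by blast
    obtain K0 c where K0: "compactin X K0"
      and dom: "\<forall>f\<in>Cfun X. \<forall>M. (\<forall>x\<in>K0. \<bar>f x\<bar> \<le> M) \<longrightarrow> \<bar>\<phi> f\<bar> \<le> c * M"
      using dual_props(3)[OF \<phi>d] by blast
    have van: "\<phi> g = 0" if "g \<in> Cfun X" "\<forall>x\<in>K0. g x = 0" for g
    proof -
      have "\<forall>x\<in>K0. \<bar>g x\<bar> \<le> 0" using that(2) by simp
      then have "\<bar>\<phi> g\<bar> \<le> c * 0" using dom that(1) by blast
      then show ?thesis by simp
    qed
    define D where "D = (topspace X - V) \<inter> K0"
    have Dc: "compactin X D" unfolding D_def by (rule closed_Int_compactin) (use Vo K0 in auto)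
    have loc: "\<exists>U. openin X U \<and> y \<in> U \<and> (\<forall>g\<in>Cfun X. (\<forall>x\<in>topspace X - U. g x = 0) \<longrightarrow> \<phi> g = 0)"
      if y: "y \<in> D" for y
    proof -
      have yt: "y \<in> topspace X" and yV: "y \<notin> V" using y by (auto simp: D_def)
      then have "y \<notin> Z" using ZK KV by blast
      then obtain U where U: "openin X U" "y \<in> U"
        and nU: "\<not> (\<exists>g\<in>Cfun X. (\<forall>x\<in>topspace X - U. g x = 0) \<and> (\<exists>\<phi>\<in>S. \<phi> g \<noteq> 0))"
        using yt unfolding Z_def by blast
      show ?thesis using U nU \<phi>S by blast
    qed
    have "\<forall>y\<in>D. \<exists>U. openin X U \<and> y \<in> U \<and> (\<forall>g\<in>Cfun X. (\<forall>x\<in>topspace X - U. g x = 0) \<longrightarrow> \<phi> g = 0)"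
      using loc by blast
    then obtain Uf where Uf: "\<forall>y\<in>D. openin X (Uf y) \<and> y \<in> Uf y \<and> (\<forall>g\<in>Cfun X. (\<forall>x\<in>topspace X - Uf y. g x = 0) \<longrightarrow> \<phi> g = 0)"
      by (rule bchoice[THEN exE])
    have "\<exists>F. finite F \<and> F \<subseteq> Uf ` D \<and> D \<subseteq> \<Union>F"
    proof -
      have "\<forall>U\<in>Uf ` D. openin X U" using Uf by blast
      moreover have "D \<subseteq> \<Union>(Uf ` D)" using Uf by blast
      ultimately show ?thesis using Dc unfolding compactin_def by blast
    qed
    then obtain F where F: "finite F" "F \<subseteq> Uf ` D" "D \<subseteq> \<Union>F" by blast
    have Fn: "\<forall>U\<in>F. openin X U \<and> (\<forall>g\<in>Cfun X. (\<forall>x\<in>topspace X - U. g x = 0) \<longrightarrow> \<phi> g = 0)"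
      using F(2) Uf by blast
    have fz: "\<forall>x\<in>K0 - D. f x = 0"
    proof
      fix x assume x: "x \<in> K0 - D"
      have "x \<in> topspace X" using x K0 compactin_subset_topspace by blast
      then have "x \<in> V" using x by (auto simp: D_def)
      then show "f x = 0" using fV by blast
    qed
    have addp: "\<And>f g. f \<in> Cfun X \<Longrightarrow> g \<in> Cfun X \<Longrightarrow> \<phi> (\<lambda>x. f x + g x) = \<phi> f + \<phi> g"
      by (rule dual_props(1)[OF \<phi>d])
    have NI: "\<forall>C f. compactin X C \<and> C \<subseteq> \<Union>F \<and> f \<in> Cfun X \<and> (\<forall>x\<in>K0 - C. f x = 0) \<longrightarrow> \<phi> f = 0"
      using null_induct[of X \<phi> K0 F] crs addp van F(1) Fn by blast
    show ?thesis
      using NI Dc F(3) fC fz by blast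
  qed
  define B1 where "B1 = {g \<in> Cfun X. \<forall>x. \<bar>g x\<bar> \<le> 1}"
  have B1b: "ck_bounded X B1" unfolding ck_bounded_def B1_def by auto
  obtain N where N: "\<forall>\<phi>\<in>S. \<forall>g\<in>B1. \<bar>\<phi> g\<bar> \<le> N" using Sb[OF B1b] by blast
  define c where "c = 2 * (max N 0 + 1)"
  have cpos: "c > 0" unfolding c_def by simp
  show ?thesis
  proof (intro exI[of _ K1] exI[of _ c] conjI ballI allI impI)
    show "compactin X K1" by (rule K1c)
    fix \<phi> f M assume \<phi>S: "\<phi> \<in> S" and fC: "f \<in> Cfun X" and M0: "0 \<le> M" and fM: "\<forall>x\<in>K1. \<bar>f x\<bar> \<le> M"
    have \<phi>d: "\<phi> \<in> ck_dual X" using \<phi>S Sd by blast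
    have fc: "continuous_map X euclideanreal f" and fz: "\<And>x. x \<notin> topspace X \<Longrightarrow> f x = 0"
      using fC by (auto simp: Cfun_iff)
    have key: "\<bar>\<phi> f\<bar> / c \<le> e" if eM: "M < e" for e
    proof -
      have e0: "e > 0" using eM M0 by simp
      define f' where "f' x = max (-(2*e)) (min (2*e) (f x))" for x
      have f'c: "continuous_map X euclideanreal f'" unfolding f'_def
        by (intro continuous_map_real_max continuous_map_real_min fc continuous_map_const[THEN iffD2]) simp_all
      have f'C: "f' \<in> Cfun X" using f'c fz e0 by (simp add: Cfun_iff f'_def)
      define g where "g x = (1 / (2*e)) * f' x" for x
      have gC: "g \<in> Cfun X" unfolding g_def by (rule Cfun_scale[OF f'C])
      have gB: "g \<in> B1"
      proof -
        have "\<bar>g x\<bar> \<le> 1" for x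
        proof -
          have "\<bar>f' x\<bar> \<le> 2*e" using e0 by (simp add: f'_def)
          then show ?thesis using e0 by (simp add: g_def abs_mult divide_le_eq)
        qed
        then show ?thesis using gC by (simp add: B1_def)
      qed
      have f'g: "f' = (\<lambda>x. (2*e) * g x)" using e0 by (auto simp: g_def)
      have \<phi>f': "\<phi> f' = (2*e) * \<phi> g" unfolding f'g by (rule dual_props(2)[OF \<phi>d gC])
      define d where "d x = f x - f' x" for x
      have "continuous_map X euclideanreal (\<lambda>x. f x - f' x)" by (rule continuous_map_diff[OF fc f'c])
      then have dC: "d \<in> Cfun X" using fz f'C unfolding d_def[abs_def] by (simp add: Cfun_iff)
      define V where "V = {x \<in> topspace X. \<bar>f x\<bar> \<in> {..<2*e}}"
      have Vo: "openin X V" unfolding V_def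
        by (rule openin_continuous_map_preimage[OF continuous_map_real_abs[OF fc]]) simp
      have KV: "K1 \<subseteq> V"
      proof
        fix x assume x: "x \<in> K1"
        then have "\<bar>f x\<bar> \<le> M" using fM by blast
        then show "x \<in> V" using x K1t eM e0 by (auto simp: V_def)
      qed
      have dV: "\<forall>x\<in>V. d x = 0" by (auto simp: V_def d_def f'_def)
      have "\<phi> d = 0" by (rule vanish[OF \<phi>S dC Vo KV dV])
      moreover have "(\<lambda>x. f' x + d x) = f" by (auto simp: d_def)
      ultimately have "\<phi> f = \<phi> f'" using dual_props(1)[OF \<phi>d f'C dC] by simp
      then have "\<bar>\<phi> f\<bar> = (2*e) * \<bar>\<phi> g\<bar>" using \<phi>f' e0 by (simp add: abs_mult)
      also have "\<dots> \<le> (2*e) * N" using N \<phi>S gB e0 by simp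
      also have "\<dots> \<le> c * e" using e0 unfolding c_def by (simp add: mult_right_mono)
      finally show ?thesis using cpos by (simp add: divide_le_eq mult.commute)
    qed
    have "\<bar>\<phi> f\<bar> / c \<le> M" by (rule dense_ge) (rule key)
    then show "\<bar>\<phi> f\<bar> \<le> c * M" using cpos by (simp add: divide_le_eq mult.commute)
  qed
qed

lemma backward:
  fixes X :: "'a topology"
  assumes T: "tychonoff_space X" and W: "W_space X" and K: "fundamental_compact_resolution X K"
  shows "\<exists>A. fundamental_bounded_resolution_strong_dual X A"
proof -
  have Kc: "\<And>\<alpha>. compactin X (K \<alpha>)" and Km: "\<And>\<alpha> \<beta>. \<alpha> \<le> \<beta> \<Longrightarrow> K \<alpha> \<subseteq> K \<beta>"
    and Kf: "\<And>C. compactin X C \<Longrightarrow> \<exists>\<alpha>. C \<subseteq> K \<alpha>"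
    using K unfolding fundamental_compact_resolution_def by auto
  define sh :: "(nat \<Rightarrow> nat) \<Rightarrow> nat \<Rightarrow> nat" where "sh \<alpha> = (\<lambda>n. \<alpha> (Suc n))" for \<alpha>
  define A where "A \<alpha> = {\<phi> \<in> ck_dual X. \<forall>f\<in>Cfun X. \<forall>M\<ge>0. (\<forall>x\<in>K (sh \<alpha>). \<bar>f x\<bar> \<le> M) \<longrightarrow> \<bar>\<phi> f\<bar> \<le> real (\<alpha> 0) * M}" for \<alpha>
  define mk :: "nat \<Rightarrow> (nat \<Rightarrow> nat) \<Rightarrow> nat \<Rightarrow> nat" where "mk m \<beta> = (\<lambda>n. case n of 0 \<Rightarrow> m | Suc k \<Rightarrow> \<beta> k)" for m \<beta>
  have mk0: "mk m \<beta> 0 = m" and mksh: "sh (mk m \<beta>) = \<beta>" for m \<beta>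
    by (auto simp: mk_def sh_def)
  have catch: "\<exists>\<alpha>. S \<subseteq> A \<alpha>"
    if SD: "S \<subseteq> ck_dual X" and dom: "\<exists>K1 c. compactin X K1 \<and> (\<forall>\<phi>\<in>S. \<forall>f\<in>Cfun X. \<forall>M\<ge>0. (\<forall>x\<in>K1. \<bar>f x\<bar> \<le> M) \<longrightarrow> \<bar>\<phi> f\<bar> \<le> c * M)" for S
  proof -
    obtain K1 c where K1: "compactin X K1" and d: "\<forall>\<phi>\<in>S. \<forall>f\<in>Cfun X. \<forall>M\<ge>0. (\<forall>x\<in>K1. \<bar>f x\<bar> \<le> M) \<longrightarrow> \<bar>\<phi> f\<bar> \<le> c * M"
      using dom by blast
    obtain \<beta> where \<beta>: "K1 \<subseteq> K \<beta>" using Kf[OF K1] by blast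
    define m where "m = nat \<lceil>c\<rceil>"
    have cm: "c \<le> real m" unfolding m_def by (rule real_nat_ceiling_ge)
    have "S \<subseteq> A (mk m \<beta>)"
    proof
      fix \<phi> assume \<phi>: "\<phi> \<in> S"
      have "\<forall>f\<in>Cfun X. \<forall>M\<ge>0. (\<forall>x\<in>K \<beta>. \<bar>f x\<bar> \<le> M) \<longrightarrow> \<bar>\<phi> f\<bar> \<le> real m * M"
      proof (intro ballI allI impI)
        fix f M assume f: "f \<in> Cfun X" and M: "0 \<le> M" and b: "\<forall>x\<in>K \<beta>. \<bar>f x\<bar> \<le> M"
        have "\<bar>\<phi> f\<bar> \<le> c * M" using d \<phi> f M b \<beta> by blast
        also have "\<dots> \<le> real m * M" using cm M by (simp add: mult_right_mono)
        finally show "\<bar>\<phi> f\<bar> \<le> real m * M" .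
      qed
      then show "\<phi> \<in> A (mk m \<beta>)" using \<phi> SD by (auto simp: A_def mk0 mksh)
    qed
    then show ?thesis by blast
  qed
  show ?thesis
    unfolding fundamental_bounded_resolution_strong_dual_def
  proof (intro exI[of _ A] conjI allI impI)
    show "strong_dual_bounded X (A \<alpha>)" for \<alpha>
      unfolding strong_dual_bounded_def
    proof (intro conjI allI impI)
      show "A \<alpha> \<subseteq> ck_dual X" by (auto simp: A_def)
      fix B assume B: "ck_bounded X B"
      have BC: "B \<subseteq> Cfun X" using B by (simp add: ck_bounded_def)
      have "\<forall>C. compactin X C \<longrightarrow> (\<exists>M. \<forall>f\<in>B. \<forall>x\<in>C. \<bar>f x\<bar> \<le> M)" using B by (simp add: ck_bounded_def)
      then obtain MB where MB: "\<forall>f\<in>B. \<forall>x\<in>K (sh \<alpha>). \<bar>f x\<bar> \<le> MB" using Kc by blast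
      have "\<forall>\<phi>\<in>A \<alpha>. \<forall>f\<in>B. \<bar>\<phi> f\<bar> \<le> real (\<alpha> 0) * max MB 0"
      proof (intro ballI)
        fix \<phi> f assume \<phi>: "\<phi> \<in> A \<alpha>" and f: "f \<in> B"
        have "\<forall>x\<in>K (sh \<alpha>). \<bar>f x\<bar> \<le> max MB 0" using MB f by force
        moreover have "f \<in> Cfun X" using BC f by blast
        ultimately show "\<bar>\<phi> f\<bar> \<le> real (\<alpha> 0) * max MB 0" using \<phi> unfolding A_def by auto
      qed
      then show "\<exists>M. \<forall>\<phi>\<in>A \<alpha>. \<forall>f\<in>B. \<bar>\<phi> f\<bar> \<le> M" by blast
    qed
    show "A \<alpha> \<subseteq> A \<beta>" if ab: "\<alpha> \<le> \<beta>" for \<alpha> \<beta>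
    proof
      fix \<phi> assume \<phi>: "\<phi> \<in> A \<alpha>"
      have a0: "\<alpha> 0 \<le> \<beta> 0" using ab by (simp add: le_fun_def)
      have "sh \<alpha> \<le> sh \<beta>" using ab by (simp add: le_fun_def sh_def)
      then have KK: "K (sh \<alpha>) \<subseteq> K (sh \<beta>)" by (rule Km)
      have "\<forall>f\<in>Cfun X. \<forall>M\<ge>0. (\<forall>x\<in>K (sh \<beta>). \<bar>f x\<bar> \<le> M) \<longrightarrow> \<bar>\<phi> f\<bar> \<le> real (\<beta> 0) * M"
      proof (intro ballI allI impI)
        fix f M assume f: "f \<in> Cfun X" and M: "0 \<le> M" and b: "\<forall>x\<in>K (sh \<beta>). \<bar>f x\<bar> \<le> M"
        have "\<bar>\<phi> f\<bar> \<le> real (\<alpha> 0) * M" using \<phi> f M b KK unfolding A_def by blast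
        also have "\<dots> \<le> real (\<beta> 0) * M" using a0 M by (simp add: mult_right_mono)
        finally show "\<bar>\<phi> f\<bar> \<le> real (\<beta> 0) * M" .
      qed
      then show "\<phi> \<in> A \<beta>" using \<phi> by (simp add: A_def)
    qed
    show "(\<Union>\<alpha>. A \<alpha>) = ck_dual X"
    proof (rule equalityI)
      show "(\<Union>\<alpha>. A \<alpha>) \<subseteq> ck_dual X" by (auto simp: A_def)
    next
      show "ck_dual X \<subseteq> (\<Union>\<alpha>. A \<alpha>)"
      proof
        fix \<phi> assume \<phi>d: "\<phi> \<in> ck_dual X"
        obtain K0 c where K0: "compactin X K0"
          and dm: "\<forall>f\<in>Cfun X. \<forall>M. (\<forall>x\<in>K0. \<bar>f x\<bar> \<le> M) \<longrightarrow> \<bar>\<phi> f\<bar> \<le> c * M"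
          using dual_props(3)[OF \<phi>d] by blast
        have "\<exists>\<alpha>. {\<phi>} \<subseteq> A \<alpha>"
        proof (rule catch)
          show "{\<phi>} \<subseteq> ck_dual X" using \<phi>d by simp
          show "\<exists>K1 c. compactin X K1 \<and> (\<forall>\<phi>\<in>{\<phi>}. \<forall>f\<in>Cfun X. \<forall>M\<ge>0. (\<forall>x\<in>K1. \<bar>f x\<bar> \<le> M) \<longrightarrow> \<bar>\<phi> f\<bar> \<le> c * M)"
            using K0 dm by blast
        qed
        then show "\<phi> \<in> (\<Union>\<alpha>. A \<alpha>)" by blast
      qed
    qed
    fix S assume S: "strong_dual_bounded X S"
    show "\<exists>\<alpha>. S \<subseteq> A \<alpha>"
    proof (rule catch)
      show "S \<subseteq> ck_dual X" using S by (simp add: strong_dual_bounded_def)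
      show "\<exists>K1 c. compactin X K1 \<and> (\<forall>\<phi>\<in>S. \<forall>f\<in>Cfun X. \<forall>M\<ge>0. (\<forall>x\<in>K1. \<bar>f x\<bar> \<le> M) \<longrightarrow> \<bar>\<phi> f\<bar> \<le> c * M)"
        by (rule main_equicont[OF T W S])
    qed
  qed
qed

theorem corollary2p10:
  fixes X :: "'a topology"
  assumes "tychonoff_space X" and "W_space X"
  shows "(\<exists>A. fundamental_bounded_resolution_strong_dual X A) \<longleftrightarrow>
         (\<exists>K. fundamental_compact_resolution X K)"
  using forward[OF assms(2)] backward[OF assms] by blast

end
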